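(* Let $G$ be a finite simple graph of order $n$ and size $m$ whose adjacency matrix $A(G)$ is non-singular, let $\bar d=2m/n$, and let $\mu_1\ge\mu_2$ be the two largest values among the absolute values of the eigenvalues of $A(G)$ (counted with multiplicity). If \[(\mu_1-\bar{d})+\frac{2m-n+1-\mu_1^2}{2\mu_2+1}\geq\frac{2\mu_2}{2\mu_2+1}\ln\mu_1,\] then $\mathcal{E}(G)\geq n-1+\bar{d}$, unless $G$ is isomorphic to the path $P_4$ or to the paw $H$.
   Context: For a finite simple graph $G$, $A(G)$ is its adjacency matrix with eigenvalues $\lambda_1\ge\cdots\ge\lambda_n$, and the energy is $\mathcal{E}(G)=\sum_{i=1}^n|\lambda_i|$. $G$ is non-singular if $A(G)$ is non-singular. $P_4$ is the path on 4 vertices, and the paw $H$ is the graph on 4 vertices consisting of a triangle together with one extra vertex adjacent to exactly one vertex of the triangle. *)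

theory Defs
  imports "Jordan_Normal_Form.Char_Poly" "Jordan_Normal_Form.Determinant"
begin

definition simple_graph :: "nat \<Rightarrow> (nat \<Rightarrow> nat \<Rightarrow> bool) \<Rightarrow> bool" where
  "simple_graph n E \<longleftrightarrow> (\<forall>i j. E i j \<longrightarrow> i < n \<and> j < n) \<and>
     (\<forall>i j. E i j \<longrightarrow> E j i) \<and> (\<forall>i. \<not> E i i)"

definition adj_matrix :: "nat \<Rightarrow> (nat \<Rightarrow> nat \<Rightarrow> bool) \<Rightarrow> real mat" where
  "adj_matrix n E = mat n n (\<lambda>(i,j). if E i j then 1 else 0)"

definition num_edges :: "nat \<Rightarrow> (nat \<Rightarrow> nat \<Rightarrow> bool) \<Rightarrow> nat" where
  "num_edges n E = card {(i,j). i < j \<and> j < n \<and> E i j}"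

definition eigenvalue_list :: "real mat \<Rightarrow> real list \<Rightarrow> bool" where
  "eigenvalue_list A es \<longleftrightarrow> char_poly A = (\<Prod>e\<leftarrow>es. [:- e, 1:])"

definition energy :: "real list \<Rightarrow> real" where
  "energy es = sum_list (map abs es)"

definition abs_desc :: "real list \<Rightarrow> real list" where
  "abs_desc es = rev (sort (map abs es))"

definition mu1 :: "real list \<Rightarrow> real" where "mu1 es = abs_desc es ! 0"
definition mu2 :: "real list \<Rightarrow> real" where "mu2 es = abs_desc es ! 1"

definition graph_iso :: "nat \<Rightarrow> (nat \<Rightarrow> nat \<Rightarrow> bool) \<Rightarrow> nat \<Rightarrow> (nat \<Rightarrow> nat \<Rightarrow> bool) \<Rightarrow> bool" where
  "graph_iso n E k F \<longleftrightarrow> (\<exists>f. bij_betw f {0..<n} {0..<k} \<and>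
     (\<forall>i<n. \<forall>j<n. E i j \<longleftrightarrow> F (f i) (f j)))"

definition P4 :: "nat \<Rightarrow> nat \<Rightarrow> bool" where
  "P4 i j \<longleftrightarrow> {i,j} \<in> {{0,1},{1,2},{2,3::nat}} \<and> i \<noteq> j"

definition paw :: "nat \<Rightarrow> nat \<Rightarrow> bool" where
  "paw i j \<longleftrightarrow> {i,j} \<in> {{0,1},{1,2},{0,2},{0,3::nat}} \<and> i \<noteq> j"

end

theory Submission
  imports Defs "Jordan_Normal_Form.Schur_Decomposition"
begin

lemma ln_ge1: fixes x :: real assumes "x \<ge> 1" shows "ln x \<le> (x - 1/x)/2"
proof -
  let ?f = "\<lambda>x::real. (x - 1/x)/2 - ln x"
  have d: "(?f has_real_derivative ((1 + 1/y^2)/2 - 1/y)) (at y)" if "y > 0" for y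
    using that by (auto intro!: derivative_eq_intros simp: field_simps power2_eq_square)
  have "?f 1 \<le> ?f x"
  proof (rule DERIV_nonneg_imp_nondecreasing[of 1 x ?f])
    fix y :: real assume y: "1 \<le> y" "y \<le> x"
    show "\<exists>y'. (?f has_real_derivative y') (at y) \<and> 0 \<le> y'"
    proof (intro exI conjI)
      show "(?f has_real_derivative ((1 + 1/y^2)/2 - 1/y)) (at y)" using d y by simp
      have "(1 + 1/y^2)/2 - 1/y = (1 - 1/y)^2/2" using y by (simp add: field_simps power2_eq_square)
      moreover have "0 \<le> (1 - 1/y)^2/2" by simp
      ultimately show "0 \<le> (1 + 1/y^2)/2 - 1/y" by linarith
    qed
  qed (use assms in auto)
  then show ?thesis by simp
qed

lemma ln_le1: fixes x :: real assumes "0 < x" "x \<le> 1" shows "- ln x \<ge> (1 - x) + (1-x)^2/2"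
proof -
  let ?f = "\<lambda>x::real. - ln x - (1 - x) - (1-x)^2/2"
  have d: "(?f has_real_derivative (- 1/y + 1 + (1 - y))) (at y)" if "y > 0" for y
    using that by (auto intro!: derivative_eq_intros simp: field_simps power2_eq_square)
  have "?f x \<ge> ?f 1"
  proof (rule DERIV_nonpos_imp_nonincreasing[of x 1 ?f])
    fix y :: real assume y: "x \<le> y" "y \<le> 1"
    show "\<exists>y'. (?f has_real_derivative y') (at y) \<and> y' \<le> 0"
    proof (intro exI conjI)
      show "(?f has_real_derivative (- 1/y + 1 + (1 - y))) (at y)" using d y assms by simp
      have "- 1/y + 1 + (1 - y) = -((1 - y)^2 / y)" using y assms by (simp add: field_simps power2_eq_square)
      moreover have "0 \<le> (1 - y)^2 / y" using y assms by simp
      ultimately show "- 1/y + 1 + (1 - y) \<le> 0" by linarith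
    qed
  qed (use assms in auto)
  then show ?thesis by simp
qed

lemma sum_poly: fixes xs :: "real list"
  shows "(\<Sum>x\<leftarrow>xs. a * ln x + b * x^2 + c * x + d) = a * (\<Sum>x\<leftarrow>xs. ln x) + b * (\<Sum>x\<leftarrow>xs. x^2) + c * sum_list xs + d * length xs"
  by (induct xs) (auto simp: algebra_simps)

lemma elem_small: fixes x t :: real assumes "0 < x" "x \<le> t" "t \<le> 1"
  shows "(-2*t) * ln x + (-1) * x^2 + (2*t+1) * x + (-2*t) \<ge> 0"
proof -
  have "ln x \<le> x - 1" using ln_le_minus_one assms by simp
  hence "(-2*t) * ln x \<ge> (-2*t) * (x - 1)" using assms by (intro mult_left_mono_neg) auto
  moreover have "x * (1 - x) \<ge> 0" using assms by auto
  ultimately show ?thesis by (simp add: algebra_simps power2_eq_square)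
qed

lemma elem_big: fixes x t :: real assumes "0 < x" "x \<le> t" "1 \<le> t"
  shows "(-2*t) * ln x + (-1) * x^2 + (2*t+2) * x + (-2*t-1) \<ge> 0"
proof (cases "x \<le> 1")
  case True
  have "- ln x \<ge> (1 - x) + (1-x)^2/2" using ln_le1 assms True by simp
  hence b: "(2*t) * (- ln x) \<ge> (2*t) * ((1 - x) + (1-x)^2/2)" using assms by (intro mult_left_mono) auto
  have c: "(1-x)^2 * (t - 1) \<ge> 0" using assms by auto
  have e1: "(2*t) * ((1 - x) + (1-x)^2/2) - x^2 + (2*t+2)*x - 2*t - 1 = (1-x)^2 * (t - 1)"
    by (simp add: field_simps power2_eq_square)
  have e2: "(-2*t) * ln x + (-1) * x^2 + (2*t+2) * x + (-2*t-1) = (2*t) * (- ln x) - x^2 + (2*t+2)*x - 2*t - 1"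
    by simp
  show ?thesis unfolding e2 using b c e1 by linarith
next
  case False
  have "ln x \<le> (x - 1/x)/2" using ln_ge1 False by simp
  hence "(2*t) * ln x \<le> (2*t) * ((x - 1/x)/2)" using assms by (intro mult_left_mono) auto
  moreover have "(2*t) * ((x - 1/x)/2) = t * x - t / x" using assms by (simp add: field_simps)
  ultimately have b: "(2*t) * ln x \<le> t * x - t / x" by simp
  have c: "(x-1)^2 * (t - x) / x \<ge> 0" using assms by auto
  have e1: "t*x + t/x - 2*t - x^2 + 2*x - 1 = (x-1)^2 * (t - x) / x"
    using assms by (simp add: field_simps power2_eq_square)
  have e2: "(-2*t) * ln x + (-1) * x^2 + (2*t+2) * x + (-2*t-1) = - ((2*t) * ln x) - x^2 + (2*t+2)*x - 2*t - 1"
    by simp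
  have e3: "(- ((2*t) * ln x) - x^2 + (2*t+2)*x - 2*t - 1) - (t*x + t/x - 2*t - x^2 + 2*x - 1) = (t * x - t / x) - (2*t) * ln x"
    by (simp add: algebra_simps)
  show ?thesis unfolding e2 using b c e1 e3 by linarith
qed

lemma core:
  fixes mu t M :: real and xs :: "real list" and n :: nat
  assumes pos: "\<forall>x\<in>set xs. 0 < x \<and> x \<le> t" and t0: "0 \<le> t" and mu0: "mu > 0"
    and lnsum: "ln mu + (\<Sum>x\<leftarrow>xs. ln x) \<ge> 0"
    and sq: "mu^2 + (\<Sum>x\<leftarrow>xs. x^2) = M"
    and len: "length xs + 1 = n"
    and D: "mu \<ge> M / n"
    and H: "(mu - M / n) + (M - real n + 1 - mu^2) / (2*t+1) \<ge> (2*t)/(2*t+1) * ln mu"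
  shows "mu + sum_list xs \<ge> real n - 1 + M / n"
proof -
  define Dv where "Dv = mu - M / n"
  define A where "A = (\<Sum>x\<leftarrow>xs. ln x)"
  define S1 where "S1 = sum_list xs"
  define S2 where "S2 = (\<Sum>x\<leftarrow>xs. x^2)"
  define N where "N = real (length xs)"
  have Nn: "N = real n - 1" using len unfolding N_def by auto
  have tp: "2*t+1 > 0" using t0 by simp
  have Hx: "(2*t+1) * Dv + (M - real n + 1 - mu^2) \<ge> 2*t * ln mu"
  proof -
    have "(2*t+1) * ((2*t)/(2*t+1) * ln mu) \<le> (2*t+1) * (Dv + (M - real n + 1 - mu^2) / (2*t+1))"
      using H tp unfolding Dv_def by (intro mult_left_mono) auto
    moreover have "(2*t+1) * ((2*t)/(2*t+1) * ln mu) = 2*t * ln mu" using tp by simp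
    moreover have "(2*t+1) * (Dv + (M - real n + 1 - mu^2) / (2*t+1)) = (2*t+1) * Dv + (M - real n + 1 - mu^2)"
      using tp by (simp add: distrib_left)
    ultimately show ?thesis by linarith
  qed
  have q: "M - real n + 1 - mu^2 = S2 - N" using sq Nn unfolding S2_def by simp
  have "2*t * ln mu \<ge> 2*t*(-A)" using lnsum t0 unfolding A_def by (intro mult_left_mono) auto
  hence tL: "2*t * ln mu \<ge> -2*t*A" by simp
  show ?thesis
  proof (cases "t \<le> 1")
    case True
    have "(\<Sum>x\<leftarrow>xs. (-2*t) * ln x + (-1) * x^2 + (2*t+1) * x + (-2*t)) \<ge> 0"
      by (rule sum_list_nonneg) (use pos True elem_small in auto)
    hence e: "(-2*t) * A - S2 + (2*t+1) * S1 - 2*t*N \<ge> 0"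
      unfolding sum_poly A_def S2_def S1_def N_def by simp
    have "(2*t+1) * (Dv + S1 - N) \<ge> 0"
    proof -
      have f1: "(2*t+1) * (Dv + S1 - N) = (2*t+1) * Dv + (2*t+1) * (S1 - N)" by (simp add: algebra_simps)
      have f2: "(2*t+1) * (S1 - N) = (2*t+1) * S1 - 2*t*N - N" by (simp add: algebra_simps)
      have f3: "(2*t+1) * (Dv + S1 - N) - ((-2*t) * A - S2 + (2*t+1) * S1 - 2*t*N) = ((2*t+1) * Dv + (S2 - N)) - 2*t*ln mu + (2*t * ln mu - (-2*t*A))"
        by (simp add: algebra_simps)
      show ?thesis using f3 e tL Hx q by linarith
    qed
    hence "Dv + S1 - N \<ge> 0" using tp by (simp add: zero_le_mult_iff)
    thus ?thesis unfolding Dv_def S1_def using Nn by simp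
  next
    case False
    have "(\<Sum>x\<leftarrow>xs. (-2*t) * ln x + (-1) * x^2 + (2*t+2) * x + (-2*t-1)) \<ge> 0"
      by (rule sum_list_nonneg) (use pos False elem_big in auto)
    hence e: "(-2*t) * A - S2 + (2*t+2) * S1 + (-2*t-1)*N \<ge> 0"
      unfolding sum_poly A_def S2_def S1_def N_def by simp
    have "(2*t+2) * (Dv + S1 - N) \<ge> Dv"
    proof -
      have f1: "(2*t+2) * (Dv + S1 - N) = Dv + ((2*t+1) * Dv) + (2*t+2) * (S1 - N)" by (simp add: algebra_simps)
      have f2: "(2*t+2) * (S1 - N) = (2*t+2) * S1 + (-2*t-1)*N - N" by (simp add: algebra_simps)
      have f3: "(2*t+2) * (Dv + S1 - N) - Dv - ((-2*t) * A - S2 + (2*t+2) * S1 + (-2*t-1)*N) = ((2*t+1) * Dv + (S2 - N)) - 2*t*ln mu + (2*t * ln mu - (-2*t*A))"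
        by (simp add: algebra_simps)
      show ?thesis using f3 e tL Hx q by linarith
    qed
    moreover have "Dv \<ge> 0" using D unfolding Dv_def by simp
    ultimately have "(2*t+2) * (Dv + S1 - N) \<ge> 0" by linarith
    hence "Dv + S1 - N \<ge> 0" using t0 by (simp add: zero_le_mult_iff)
    thus ?thesis unfolding Dv_def S1_def using Nn by simp
  qed
qed

lemma cs_sum: fixes f :: "nat \<Rightarrow> real"
  shows "(\<Sum>i\<in>{0..<n}. f i)^2 \<le> real n * (\<Sum>i\<in>{0..<n}. (f i)^2)"
proof (cases "n = 0")
  case True then show ?thesis by simp
next
  case False
  define S where "S = (\<Sum>i\<in>{0..<n}. f i)"
  define Q where "Q = (\<Sum>i\<in>{0..<n}. (f i)^2)"
  define N where "N = real n"
  have N0: "N > 0" using False unfolding N_def by simp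
  have pt: "\<And>i. (N * f i - S)^2 = N^2 * (f i)^2 - (2*N*S) * f i + S^2"
    by (simp add: power2_eq_square algebra_simps)
  have "(\<Sum>i\<in>{0..<n}. (N * f i - S)^2) = (\<Sum>i\<in>{0..<n}. N^2 * (f i)^2 - (2*N*S) * f i + S^2)"
    using pt by simp
  also have "\<dots> = N^2 * Q - (2*N*S) * S + N * S^2"
    unfolding Q_def S_def N_def
    by (simp only: sum.distrib sum_subtractf sum_distrib_left[symmetric] sum_constant) simp
  finally have "0 \<le> N^2 * Q - (2*N*S) * S + N * S^2"
    by (metis sum_nonneg zero_le_power2)
  hence "0 \<le> N * (N * Q - S^2)" by (simp add: power2_eq_square algebra_simps)
  hence "0 \<le> N * Q - S^2" using N0 by (simp add: zero_le_mult_iff)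
  thus ?thesis unfolding S_def Q_def N_def by simp
qed

lemma sum_single: assumes "finite S" "i \<in> S" "\<And>l. l \<in> S \<Longrightarrow> l \<noteq> i \<Longrightarrow> f l = (0::'b::comm_monoid_add)"
  shows "sum f S = f i"
proof -
  have "sum f S = f i + sum f (S - {i})" using assms by (simp add: sum.remove)
  also have "sum f (S - {i}) = 0" using assms by (intro sum.neutral) auto
  finally show ?thesis by simp
qed

definition mtr :: "real mat \<Rightarrow> real" where
  "mtr M = (\<Sum>i\<in>{0..<dim_row M}. M $$ (i,i))"

lemma mult_entry: assumes "M \<in> carrier_mat n n" "N \<in> carrier_mat n n" "i < n" "j < n"
  shows "(M * N) $$ (i,j) = (\<Sum>l\<in>{0..<n}. M $$ (i,l) * N $$ (l,j))"
  using assms by (auto simp: scalar_prod_def)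

lemma mtr_comm: assumes "M \<in> carrier_mat n n" "N \<in> carrier_mat n n"
  shows "mtr (M * N) = mtr (N * M)"
proof -
  have "mtr (M * N) = (\<Sum>i\<in>{0..<n}. \<Sum>l\<in>{0..<n}. M $$ (i,l) * N $$ (l,i))"
    unfolding mtr_def using assms mult_entry[OF assms] by (auto intro!: sum.cong)
  also have "\<dots> = (\<Sum>l\<in>{0..<n}. \<Sum>i\<in>{0..<n}. N $$ (l,i) * M $$ (i,l))"
    by (subst sum.swap) (simp add: mult.commute)
  also have "\<dots> = mtr (N * M)"
    unfolding mtr_def using assms mult_entry[OF assms(2,1)] by (auto intro!: sum.cong)
  finally show ?thesis .
qed

lemma ut_mult: assumes X: "X \<in> carrier_mat n n" and Y: "Y \<in> carrier_mat n n"
  and ux: "upper_triangular X" and uy: "upper_triangular Y"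
  shows "upper_triangular (X * Y)" "\<And>i. i < n \<Longrightarrow> (X * Y) $$ (i,i) = X $$ (i,i) * Y $$ (i,i)"
proof -
  show "upper_triangular (X * Y)"
  proof (rule upper_triangularI)
    fix i j assume ij: "j < i" "i < dim_row (X * Y)"
    hence i: "i < n" using X by auto
    have "(X * Y) $$ (i,j) = (\<Sum>l\<in>{0..<n}. X $$ (i,l) * Y $$ (l,j))"
      using mult_entry[OF X Y i] ij i by auto
    also have "\<dots> = 0"
    proof (intro sum.neutral ballI)
      fix l assume l: "l \<in> {0..<n}"
      show "X $$ (i,l) * Y $$ (l,j) = 0"
      proof (cases "l < i")
        case True then show ?thesis using ux X i by (auto simp: upper_triangular_def)
      next
        case False then have "j < l" using ij by auto
        then show ?thesis using uy Y l by (auto simp: upper_triangular_def)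
      qed
    qed
    finally show "(X * Y) $$ (i,j) = 0" .
  qed
  fix i assume i: "i < n"
  have "(X * Y) $$ (i,i) = (\<Sum>l\<in>{0..<n}. X $$ (i,l) * Y $$ (l,i))"
    using mult_entry[OF X Y i i] .
  also have "\<dots> = X $$ (i,i) * Y $$ (i,i)"
  proof (rule sum_single)
    fix l assume l: "l \<in> {0..<n}" "l \<noteq> i"
    show "X $$ (i,l) * Y $$ (l,i) = 0"
    proof (cases "l < i")
      case True then show ?thesis using ux X i by (auto simp: upper_triangular_def)
    next
      case False then have "i < l" using l by auto
      then show ?thesis using uy Y l by (auto simp: upper_triangular_def)
    qed
  qed (use i in auto)
  finally show "(X * Y) $$ (i,i) = X $$ (i,i) * Y $$ (i,i)" .
qed

lemma ut_pow: assumes B: "B \<in> carrier_mat n n" and ub: "upper_triangular B"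
  shows "upper_triangular (B ^\<^sub>m k) \<and> (\<forall>i<n. (B ^\<^sub>m k) $$ (i,i) = (B $$ (i,i))^k)"
proof (induct k)
  case 0 then show ?case using B by auto
next
  case (Suc k)
  have c: "B ^\<^sub>m k \<in> carrier_mat n n" using B by auto
  show ?case using ut_mult[OF c B _ ub] Suc by (auto simp: power_commutes)
qed

lemma spectral:
  fixes A :: "real mat"
  assumes A: "A \<in> carrier_mat n n" and cp: "char_poly A = (\<Prod>e\<leftarrow>es. [:- e, 1:])"
  shows "length es = n" "\<And>k. mtr (A ^\<^sub>m k) = (\<Sum>e\<leftarrow>es. e^k)" "det A = prod_list es"
proof -
  obtain B P Q where sd: "schur_decomposition A es = (B,P,Q)" by (cases "schur_decomposition A es") auto
  from schur_decomposition[OF A cp sd]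
  have sw: "similar_mat_wit A B P Q" and ub: "upper_triangular B" and dg: "diag_mat B = es" by auto
  from sw A have cB: "B \<in> carrier_mat n n" and cP: "P \<in> carrier_mat n n" and cQ: "Q \<in> carrier_mat n n"
    and PQ: "P * Q = 1\<^sub>m n" and QP: "Q * P = 1\<^sub>m n" and AB: "A = P * B * Q"
    unfolding similar_mat_wit_def Let_def by auto
  show len: "length es = n" using dg cB unfolding diag_mat_def by auto
  have esi: "\<And>i. i < n \<Longrightarrow> es ! i = B $$ (i,i)" using dg cB unfolding diag_mat_def by auto
  fix k
  have cBk: "B ^\<^sub>m k \<in> carrier_mat n n" using cB by auto
  have "mtr (A ^\<^sub>m k) = mtr (P * B ^\<^sub>m k * Q)" using similar_mat_wit_pow_id[OF sw] by simp
  also have "\<dots> = mtr (Q * (P * B ^\<^sub>m k))" by (rule mtr_comm) (use cP cQ cBk in auto)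
  also have "Q * (P * B ^\<^sub>m k) = (Q * P) * B ^\<^sub>m k" using cP cQ cBk by (simp add: assoc_mult_mat)
  also have "\<dots> = B ^\<^sub>m k" using QP cBk by (simp add: left_mult_one_mat)
  also have "mtr (B ^\<^sub>m k) = (\<Sum>i\<in>{0..<n}. (B $$ (i,i))^k)"
    unfolding mtr_def using ut_pow[OF cB ub, of k] cBk by auto
  also have "\<dots> = (\<Sum>i\<in>{0..<n}. (es ! i)^k)" using esi by simp
  also have "\<dots> = (\<Sum>e\<leftarrow>es. e^k)"
    using len by (simp add: sum_list_sum_nth atLeast0LessThan)
  finally show "mtr (A ^\<^sub>m k) = (\<Sum>e\<leftarrow>es. e^k)" .
next
  obtain B P Q where sd: "schur_decomposition A es = (B,P,Q)" by (cases "schur_decomposition A es") auto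
  from schur_decomposition[OF A cp sd]
  have sw: "similar_mat_wit A B P Q" and ub: "upper_triangular B" and dg: "diag_mat B = es" by auto
  from sw A have cB: "B \<in> carrier_mat n n" and cP: "P \<in> carrier_mat n n" and cQ: "Q \<in> carrier_mat n n"
    and PQ: "P * Q = 1\<^sub>m n" and QP: "Q * P = 1\<^sub>m n" and AB: "A = P * B * Q"
    unfolding similar_mat_wit_def Let_def by auto
  have "det A = det P * det B * det Q" unfolding AB using cP cB cQ
    by (simp add: det_mult[of _ n])
  also have "\<dots> = det (P * Q) * det B" using cP cQ by (simp add: det_mult[of _ n])
  also have "\<dots> = det B" using PQ by simp
  also have "\<dots> = prod_list es" using det_upper_triangular[OF ub cB] dg by simp
  finally show "det A = prod_list es" .
qed

lemma pow_comm: assumes A: "(A::real mat) \<in> carrier_mat n n" shows "A * A ^\<^sub>m k = A ^\<^sub>m k * A"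
proof (induct k)
  case 0 then show ?case using A by (simp add: right_mult_one_mat left_mult_one_mat)
next
  case (Suc k)
  have c: "A ^\<^sub>m k \<in> carrier_mat n n" using A by simp
  have "A * A ^\<^sub>m Suc k = (A * A ^\<^sub>m k) * A" using assoc_mult_mat[OF A c A] by simp
  also have "\<dots> = A ^\<^sub>m Suc k * A" using Suc by simp
  finally show ?case .
qed

lemma pow_add: assumes A: "(A::real mat) \<in> carrier_mat n n" shows "A ^\<^sub>m (a + b) = A ^\<^sub>m a * A ^\<^sub>m b"
proof (induct b)
  case 0 then show ?case using A by (simp add: right_mult_one_mat)
next
  case (Suc b)
  have "A ^\<^sub>m (a + Suc b) = A ^\<^sub>m (a + b) * A" by simp
  also have "\<dots> = A ^\<^sub>m a * A ^\<^sub>m b * A" using Suc by simp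
  also have "\<dots> = A ^\<^sub>m a * (A ^\<^sub>m b * A)" using A by (simp add: assoc_mult_mat[of _ n n _ n _ n])
  finally show ?case by simp
qed

lemma pow_transpose: assumes A: "(A::real mat) \<in> carrier_mat n n" and T: "transpose_mat A = A"
  shows "transpose_mat (A ^\<^sub>m k) = A ^\<^sub>m k"
proof (induct k)
  case 0 then show ?case using A by (simp add: transpose_one)
next
  case (Suc k)
  have c: "A ^\<^sub>m k \<in> carrier_mat n n" using A by simp
  have "transpose_mat (A ^\<^sub>m Suc k) = transpose_mat A * transpose_mat (A ^\<^sub>m k)"
    using transpose_mult[OF c A] by simp
  also have "\<dots> = A * A ^\<^sub>m k" using T Suc by simp
  also have "\<dots> = A ^\<^sub>m Suc k" using pow_comm[OF A] by simp
  finally show ?case .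
qed

definition wsum :: "nat \<Rightarrow> real mat \<Rightarrow> real" where
  "wsum n M = (\<Sum>i\<in>{0..<n}. \<Sum>j\<in>{0..<n}. M $$ (i,j))"

lemma walk_ineq:
  assumes S: "S \<in> carrier_mat n n" and sym: "\<And>i j. i < n \<Longrightarrow> j < n \<Longrightarrow> S $$ (i,j) = S $$ (j,i)"
  shows "wsum n (S * S) \<le> real n * mtr (S * S)" "(wsum n S)^2 \<le> real n * wsum n (S * S)"
proof -
  define r where "r l = (\<Sum>j\<in>{0..<n}. S $$ (l,j))" for l
  have me: "\<And>i j. i < n \<Longrightarrow> j < n \<Longrightarrow> (S * S) $$ (i,j) = (\<Sum>l\<in>{0..<n}. S $$ (i,l) * S $$ (l,j))"
    using mult_entry[OF S S] by simp
  have "wsum n (S * S) = (\<Sum>i\<in>{0..<n}. \<Sum>j\<in>{0..<n}. \<Sum>l\<in>{0..<n}. S $$ (i,l) * S $$ (l,j))"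
    unfolding wsum_def using me by simp
  also have "\<dots> = (\<Sum>l\<in>{0..<n}. \<Sum>i\<in>{0..<n}. \<Sum>j\<in>{0..<n}. S $$ (l,i) * S $$ (l,j))"
  proof -
    have "(\<Sum>i\<in>{0..<n}. \<Sum>j\<in>{0..<n}. \<Sum>l\<in>{0..<n}. S $$ (i,l) * S $$ (l,j))
        = (\<Sum>i\<in>{0..<n}. \<Sum>l\<in>{0..<n}. \<Sum>j\<in>{0..<n}. S $$ (i,l) * S $$ (l,j))"
      by (rule sum.cong[OF refl], rule sum.swap)
    also have "\<dots> = (\<Sum>l\<in>{0..<n}. \<Sum>i\<in>{0..<n}. \<Sum>j\<in>{0..<n}. S $$ (i,l) * S $$ (l,j))"
      by (rule sum.swap)
    also have "\<dots> = (\<Sum>l\<in>{0..<n}. \<Sum>i\<in>{0..<n}. \<Sum>j\<in>{0..<n}. S $$ (l,i) * S $$ (l,j))"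
      using sym by (intro sum.cong refl) auto
    finally show ?thesis .
  qed
  also have "\<dots> = (\<Sum>l\<in>{0..<n}. (r l)^2)"
    unfolding r_def power2_eq_square by (simp add: sum_product)
  finally have w2: "wsum n (S * S) = (\<Sum>l\<in>{0..<n}. (r l)^2)" .
  have "mtr (S * S) = (\<Sum>l\<in>{0..<n}. \<Sum>j\<in>{0..<n}. S $$ (l,j) * S $$ (j,l))"
    unfolding mtr_def using me S by simp
  also have "\<dots> = (\<Sum>l\<in>{0..<n}. \<Sum>j\<in>{0..<n}. (S $$ (l,j))^2)"
    using sym by (intro sum.cong refl) (auto simp: power2_eq_square)
  finally have t2: "mtr (S * S) = (\<Sum>l\<in>{0..<n}. \<Sum>j\<in>{0..<n}. (S $$ (l,j))^2)" .
  have "(\<Sum>l\<in>{0..<n}. (r l)^2) \<le> (\<Sum>l\<in>{0..<n}. real n * (\<Sum>j\<in>{0..<n}. (S $$ (l,j))^2))"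
    unfolding r_def by (intro sum_mono cs_sum)
  also have "\<dots> = real n * mtr (S * S)" unfolding t2 by (simp add: sum_distrib_left)
  finally show "wsum n (S * S) \<le> real n * mtr (S * S)" using w2 by simp
  have "wsum n S = (\<Sum>l\<in>{0..<n}. r l)" unfolding wsum_def r_def ..
  then show "(wsum n S)^2 \<le> real n * wsum n (S * S)" using w2 cs_sum[of r n] by simp
qed

lemma mu_ge_avg:
  fixes A :: "real mat" and es :: "real list" and mu :: real
  assumes A: "A \<in> carrier_mat n n" and T: "transpose_mat A = A" and n0: "n > 0"
    and tr: "\<And>k. mtr (A ^\<^sub>m k) = (\<Sum>e\<leftarrow>es. e^k)" and len: "length es = n"
    and bound: "\<forall>e\<in>set es. \<bar>e\<bar> \<le> mu" and W: "wsum n A \<ge> 0"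
  shows "mu \<ge> wsum n A / n"
proof (rule ccontr)
  assume "\<not> mu \<ge> wsum n A / n"
  hence lt: "mu < wsum n A / n" by simp
  define dd where "dd = wsum n A / n"
  have nr: "real n > 0" using n0 by simp
  have dd0: "dd \<ge> 0" unfolding dd_def using W nr by simp
  have symk: "\<And>k i j. i < n \<Longrightarrow> j < n \<Longrightarrow> (A ^\<^sub>m k) $$ (i,j) = (A ^\<^sub>m k) $$ (j,i)"
  proof -
    fix k i j assume ij: "i < n" "j < n"
    have "(A ^\<^sub>m k) $$ (i,j) = transpose_mat (A ^\<^sub>m k) $$ (i,j)" using pow_transpose[OF A T, of k] by simp
    also have "\<dots> = (A ^\<^sub>m k) $$ (j,i)" using ij A by simp
    finally show "(A ^\<^sub>m k) $$ (i,j) = (A ^\<^sub>m k) $$ (j,i)" .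
  qed
  have sq: "\<And>k. A ^\<^sub>m (2^Suc k) = A ^\<^sub>m (2^k) * A ^\<^sub>m (2^k)"
    using pow_add[OF A] by (metis mult_2 power_Suc)
  have claim: "\<And>k. wsum n (A ^\<^sub>m (2^k)) \<ge> real n * dd^(2^k)"
  proof -
    fix k show "wsum n (A ^\<^sub>m (2^k)) \<ge> real n * dd^(2^k)"
    proof (induct k)
      case 0
      have "A ^\<^sub>m (2^0) = A" using A by (simp add: left_mult_one_mat)
      then show ?case unfolding dd_def using nr by simp
    next
      case (Suc k)
      define S where "S = A ^\<^sub>m (2^k)"
      have cS: "S \<in> carrier_mat n n" unfolding S_def using A by simp
      have sS: "\<And>i j. i < n \<Longrightarrow> j < n \<Longrightarrow> S $$ (i,j) = S $$ (j,i)" unfolding S_def by (rule symk)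
      have h1: "(wsum n S)^2 \<le> real n * wsum n (S * S)" using walk_ineq(2)[OF cS sS] .
      have h2: "wsum n S \<ge> real n * dd^(2^k)" using Suc unfolding S_def .
      have h3: "real n * dd^(2^k) \<ge> 0" using dd0 nr by simp
      have "(real n * dd^(2^k))^2 \<le> (wsum n S)^2" using h2 h3 by (intro power_mono) auto
      also have "(real n * dd^(2^k))^2 = real n * (real n * dd^(2^Suc k))"
        by (simp add: power2_eq_square power_mult_distrib power_add[symmetric] mult_2[symmetric] algebra_simps)
      finally have "real n * (real n * dd^(2^Suc k)) \<le> real n * wsum n (S * S)" using h1 by linarith
      hence "real n * dd^(2^Suc k) \<le> wsum n (S * S)" using nr by simp
      then show ?case using sq unfolding S_def by simp
    qed
  qed
  have key: "\<And>k. dd^(2^Suc k) \<le> real n * mu^(2^Suc k)"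
  proof -
    fix k
    define S where "S = A ^\<^sub>m (2^k)"
    define N :: nat where "N = 2^Suc k"
    have cS: "S \<in> carrier_mat n n" unfolding S_def using A by simp
    have sS: "\<And>i j. i < n \<Longrightarrow> j < n \<Longrightarrow> S $$ (i,j) = S $$ (j,i)" unfolding S_def by (rule symk)
    have "real n * dd^N \<le> wsum n (S * S)" using claim[of "Suc k"] sq unfolding S_def N_def by simp
    also have "\<dots> \<le> real n * mtr (S * S)" using walk_ineq(1)[OF cS sS] .
    also have "mtr (S * S) = (\<Sum>e\<leftarrow>es. e^N)" using tr[of N] sq unfolding S_def N_def by simp
    also have "(\<Sum>e\<leftarrow>es. e^N) \<le> (\<Sum>e\<leftarrow>es. mu^N)"
    proof (rule sum_list_mono)
      fix e assume e: "e \<in> set es"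
      have ev: "even N" unfolding N_def by simp
      have "e^N = \<bar>e\<bar>^N" using ev by (simp add: power_even_abs)
      also have "\<dots> \<le> mu^N" using bound e by (intro power_mono) auto
      finally show "e^N \<le> mu^N" .
    qed
    also have "\<dots> = real n * mu^N" using len by (simp add: sum_list_triv)
    finally have "real n * dd^N \<le> real n * (real n * mu^N)" using nr by (simp add: mult_left_mono)
    hence "dd^N \<le> real n * mu^N" using nr by simp
    thus "dd^(2^Suc k) \<le> real n * mu^(2^Suc k)" unfolding N_def .
  qed
  have mu0: "mu \<ge> 0"
  proof -
    obtain e where "e \<in> set es" using len n0 by (cases es) auto
    thus ?thesis using bound by force
  qed
  have ddp: "dd > 0" using lt mu0 unfolding dd_def by simp
  define x where "x = mu / dd"
  have x0: "x \<ge> 0" unfolding x_def using mu0 ddp by simp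
  have x1: "x < 1" unfolding x_def using ddp lt unfolding dd_def[symmetric] by simp
  obtain N0 where N0: "x^N0 < 1 / real n" using real_arch_pow_inv[of "1 / real n" x] nr x1 by auto
  have "N0 \<le> 2^Suc N0"
    by (metis less_exp order.strict_implies_order le_SucI power_Suc mult_2 le_add1 order.trans)
  hence "x^(2^Suc N0) \<le> x^N0" using x0 x1 by (intro power_decreasing) auto
  hence "real n * x^(2^Suc N0) \<le> real n * x^N0" using nr by (intro mult_left_mono) auto
  moreover have "real n * x^N0 < 1" using N0 nr by (simp add: field_simps)
  ultimately have xl: "real n * x^(2^Suc N0) < 1" by linarith
  have "dd^(2^Suc N0) \<le> real n * mu^(2^Suc N0)" by (rule key)
  also have "mu^(2^Suc N0) = x^(2^Suc N0) * dd^(2^Suc N0)" unfolding x_def using ddp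
    by (simp add: power_divide)
  finally have "dd^(2^Suc N0) * 1 \<le> dd^(2^Suc N0) * (real n * x^(2^Suc N0))" by (simp add: algebra_simps)
  hence "1 \<le> real n * x^(2^Suc N0)" using ddp by (simp add: mult_le_cancel_left_pos)
  thus False using xl by simp
qed

lemma adj_carrier: "adj_matrix n E \<in> carrier_mat n n"
  unfolding adj_matrix_def by simp

lemma adj_entry: "i < n \<Longrightarrow> j < n \<Longrightarrow> adj_matrix n E $$ (i,j) = (if E i j then 1 else 0)"
  unfolding adj_matrix_def by simp

lemma adj_transpose: assumes "simple_graph n E" shows "transpose_mat (adj_matrix n E) = adj_matrix n E"
  using assms unfolding simple_graph_def adj_matrix_def by (intro eq_matI) auto

lemma count_edges: assumes G: "simple_graph n E"
  shows "(\<Sum>i\<in>{0..<n}. \<Sum>j\<in>{0..<n}. if E i j then 1 else (0::real)) = 2 * real (num_edges n E)"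
proof -
  define T where "T = {p \<in> {0..<n} \<times> {0..<n}. E (fst p) (snd p)}"
  define S1 where "S1 = {(i,j). i < j \<and> j < n \<and> E i j}"
  have fin: "finite ({0..<n} \<times> {0..<n})" by simp
  have "(\<Sum>i\<in>{0..<n}. \<Sum>j\<in>{0..<n}. if E i j then 1 else (0::real))
      = (\<Sum>p\<in>{0..<n} \<times> {0..<n}. if E (fst p) (snd p) then 1 else (0::real))"
    by (simp add: sum.cartesian_product split_beta)
  also have "\<dots> = (\<Sum>p\<in>T. 1)" unfolding T_def using sum.inter_filter[OF fin, of "\<lambda>_. (1::real)"] by simp
  also have "\<dots> = real (card T)" by simp
  also have "T = S1 \<union> prod.swap ` S1"
  proof
    show "T \<subseteq> S1 \<union> prod.swap ` S1"
    proof
      fix p assume "p \<in> T"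
      then obtain i j where p: "p = (i,j)" "i < n" "j < n" "E i j" unfolding T_def by auto
      have "i \<noteq> j" using G p unfolding simple_graph_def by auto
      show "p \<in> S1 \<union> prod.swap ` S1"
      proof (cases "i < j")
        case True then show ?thesis using p unfolding S1_def by auto
      next
        case False
        then have "(j,i) \<in> S1" using p \<open>i \<noteq> j\<close> G unfolding S1_def simple_graph_def by auto
        then show ?thesis using p by (auto intro: image_eqI[of _ _ "(j,i)"])
      qed
    qed
    show "S1 \<union> prod.swap ` S1 \<subseteq> T" using G unfolding S1_def T_def simple_graph_def by auto
  qed
  also have "card (S1 \<union> prod.swap ` S1) = card S1 + card (prod.swap ` S1)"
  proof (rule card_Un_disjoint)
    have "S1 \<subseteq> {0..<n} \<times> {0..<n}" unfolding S1_def by auto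
    thus f: "finite S1" using finite_subset fin by blast
    show "finite (prod.swap ` S1)" using f by simp
    show "S1 \<inter> prod.swap ` S1 = {}" unfolding S1_def by auto
  qed
  also have "card (prod.swap ` S1) = card S1" by (rule card_image) simp
  also have "card S1 = num_edges n E" unfolding S1_def num_edges_def ..
  finally show ?thesis by simp
qed

lemma wsum_adj: assumes "simple_graph n E"
  shows "wsum n (adj_matrix n E) = 2 * real (num_edges n E)"
  unfolding wsum_def using count_edges[OF assms] by (simp add: adj_entry)

lemma mtr_adj2: assumes G: "simple_graph n E"
  shows "mtr (adj_matrix n E ^\<^sub>m 2) = 2 * real (num_edges n E)"
proof -
  let ?A = "adj_matrix n E"
  have c: "?A \<in> carrier_mat n n" by (rule adj_carrier)
  have "?A ^\<^sub>m 2 = ?A * ?A" using c by (simp add: numeral_2_eq_2 left_mult_one_mat)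
  hence "mtr (?A ^\<^sub>m 2) = (\<Sum>i\<in>{0..<n}. \<Sum>l\<in>{0..<n}. ?A $$ (i,l) * ?A $$ (l,i))"
    unfolding mtr_def using mult_entry[OF c c] c by simp
  also have "\<dots> = (\<Sum>i\<in>{0..<n}. \<Sum>l\<in>{0..<n}. if E i l then 1 else (0::real))"
    using G unfolding simple_graph_def by (intro sum.cong refl) (auto simp: adj_entry)
  finally show ?thesis using count_edges[OF G] by simp
qed

lemma adj_det_int: assumes "det (adj_matrix n E) \<noteq> 0" shows "\<bar>det (adj_matrix n E)\<bar> \<ge> 1"
proof -
  define Ai :: "int mat" where "Ai = mat n n (\<lambda>(i,j). if E i j then 1 else 0)"
  have "adj_matrix n E = map_mat of_int Ai" unfolding Ai_def adj_matrix_def by (intro eq_matI) auto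
  hence d: "det (adj_matrix n E) = of_int (det Ai)" by (simp add: of_int_hom.hom_det)
  hence "det Ai \<noteq> 0" using assms by auto
  hence "\<bar>det Ai\<bar> \<ge> 1" by linarith
  thus ?thesis using d by (metis of_int_1_le_iff of_int_abs)
qed

lemma mset_sum_map: fixes f :: "real \<Rightarrow> real"
  assumes h: "mset xs = mset ys" shows "sum_list (map f xs) = sum_list (map f ys)"
proof -
  have "sum_list (map f xs) = sum_mset (mset (map f xs))" by (rule sum_mset_sum_list[symmetric])
  also have "mset (map f xs) = mset (map f ys)" using h by simp
  also have "sum_mset (mset (map f ys)) = sum_list (map f ys)" by (rule sum_mset_sum_list)
  finally show ?thesis .
qed

lemma mset_prod_map: fixes f :: "real \<Rightarrow> real"
  assumes h: "mset xs = mset ys" shows "prod_list (map f xs) = prod_list (map f ys)"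
proof -
  have "prod_list (map f xs) = prod_mset (mset (map f xs))" by (rule prod_mset_prod_list[symmetric])
  also have "mset (map f xs) = mset (map f ys)" using h by simp
  also have "prod_mset (mset (map f ys)) = prod_list (map f ys)" by (rule prod_mset_prod_list)
  finally show ?thesis .
qed

lemma prod_list_pos': "(\<forall>x\<in>set xs. (x::real) > 0) \<Longrightarrow> prod_list xs > 0"
  by (induct xs) auto

lemma ln_prod_list: "(\<forall>x\<in>set xs. (x::real) > 0) \<Longrightarrow> ln (prod_list xs) = (\<Sum>x\<leftarrow>xs. ln x)"
proof (induct xs)
  case Nil then show ?case by simp
next
  case (Cons a xs)
  have p: "prod_list xs > 0" using Cons(2) by (intro prod_list_pos') auto
  have a: "a > 0" using Cons(2) by simp
  have "ln (prod_list (a # xs)) = ln a + ln (prod_list xs)" using ln_mult_pos[OF a p] by simp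
  also have "ln (prod_list xs) = (\<Sum>x\<leftarrow>xs. ln x)" using Cons by simp
  finally show ?case by simp
qed

lemma abs_prod_list': "\<bar>prod_list xs\<bar> = prod_list (map abs (xs::real list))"
  by (induct xs) (auto simp: abs_mult)

theorem corollary3p1:
  fixes n :: nat and E :: "nat \<Rightarrow> nat \<Rightarrow> bool" and es :: "real list"
  assumes "simple_graph n E"
    and "n \<ge> 2"
    and "det (adj_matrix n E) \<noteq> 0"
    and "eigenvalue_list (adj_matrix n E) es"
    and "(mu1 es - 2 * real (num_edges n E) / real n)
          + (2 * real (num_edges n E) - real n + 1 - (mu1 es)^2) / (2 * mu2 es + 1)
          \<ge> (2 * mu2 es) / (2 * mu2 es + 1) * ln (mu1 es)"
    and "\<not> graph_iso n E 4 P4"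
    and "\<not> graph_iso n E 4 paw"
  shows "energy es \<ge> real n - 1 + 2 * real (num_edges n E) / real n"
proof -
  note G = assms(1) and n2 = assms(2) and dt = assms(3) and H = assms(5)
  define A where "A = adj_matrix n E"
  define M where "M = 2 * real (num_edges n E)"
  have cA: "A \<in> carrier_mat n n" unfolding A_def by (rule adj_carrier)
  have cp: "char_poly A = (\<Prod>e\<leftarrow>es. [:- e, 1:])" using assms(4) unfolding eigenvalue_list_def A_def .
  note sp = spectral[OF cA cp]
  have len: "length es = n" using sp(1) .
  have pe: "prod_list es = det A" using sp(3) by simp
  have "prod_list es \<noteq> 0" using dt pe unfolding A_def by simp
  hence "0 \<notin> set es" by (simp add: prod_list_zero_iff)
  hence es0: "\<forall>e\<in>set es. e \<noteq> 0" by auto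
  define mus where "mus = abs_desc es"
  define ss where "ss = sort (map abs es)"
  have mus_ss: "mus = rev ss" unfolding mus_def ss_def abs_desc_def ..
  have ms: "mset mus = mset (map abs es)" unfolding mus_ss ss_def by simp
  have lm: "length mus = n" unfolding mus_ss ss_def using len by simp
  have sset: "set mus = abs ` set es" using mset_eq_setD[OF ms] by simp
  have srt: "sorted ss" unfolding ss_def by simp
  have lss: "length ss = n" unfolding ss_def using len by simp
  have mono: "\<And>i j. i \<le> j \<Longrightarrow> j < n \<Longrightarrow> mus ! j \<le> mus ! i"
  proof -
    fix i j assume ij: "i \<le> j" "j < n"
    have "mus ! j = ss ! (n - Suc j)" unfolding mus_ss using ij lss by (simp add: rev_nth)
    also have "\<dots> \<le> ss ! (n - Suc i)" using ij lss srt by (intro sorted_nth_mono) auto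
    also have "\<dots> = mus ! i" unfolding mus_ss using ij lss by (simp add: rev_nth)
    finally show "mus ! j \<le> mus ! i" .
  qed
  define mu where "mu = mus ! 0"
  define t where "t = mus ! 1"
  define xs where "xs = tl mus"
  have mu_def2: "mu1 es = mu" unfolding mu_def mus_def mu1_def ..
  have t_def2: "mu2 es = t" unfolding t_def mus_def mu2_def ..
  have "mus \<noteq> []" using lm n2 by auto
  hence mus_cons: "mus = mu # xs" unfolding mu_def xs_def by (simp add: hd_conv_nth[symmetric])
  have pos: "\<forall>x\<in>set mus. x > 0" using sset es0 by auto
  have mu_max: "\<forall>x\<in>set mus. x \<le> mu"
  proof
    fix x assume "x \<in> set mus"
    then obtain j where "j < n" "x = mus ! j" using lm by (metis in_set_conv_nth)
    thus "x \<le> mu" unfolding mu_def using mono[of 0 j] by auto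
  qed
  have bound: "\<forall>e\<in>set es. \<bar>e\<bar> \<le> mu" using mu_max sset by auto
  have xs_le: "\<forall>x\<in>set xs. 0 < x \<and> x \<le> t"
  proof
    fix x assume x: "x \<in> set xs"
    then obtain j where j: "j < length xs" "x = xs ! j" by (metis in_set_conv_nth)
    have lx: "length xs = n - 1" using mus_cons lm by (simp add: xs_def)
    have "x = mus ! Suc j" using j mus_cons by simp
    moreover have "mus ! Suc j \<le> mus ! 1" using mono[of 1 "Suc j"] j lx by auto
    moreover have "x \<in> set mus" using x mus_cons by simp
    ultimately show "0 < x \<and> x \<le> t" using pos unfolding t_def by auto
  qed
  have "mus ! 1 \<in> set mus" using lm n2 by (intro nth_mem) simp
  hence t0: "t \<ge> 0" using pos unfolding t_def by force
  have mu0: "mu > 0" using pos mus_cons by simp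
  have prodm: "prod_list mus = \<bar>prod_list es\<bar>"
    using mset_prod_map[OF ms, of id] by (simp add: abs_prod_list')
  have "prod_list mus \<ge> 1" using prodm pe adj_det_int[OF dt] unfolding A_def by simp
  hence "ln (prod_list mus) \<ge> 0" by simp
  hence lnsum: "ln mu + (\<Sum>x\<leftarrow>xs. ln x) \<ge> 0" using ln_prod_list[OF pos] mus_cons by simp
  have "(\<Sum>x\<leftarrow>mus. x^2) = (\<Sum>x\<leftarrow>map abs es. x^2)" by (rule mset_sum_map[OF ms])
  also have "\<dots> = (\<Sum>e\<leftarrow>es. e^2)" by (simp add: o_def)
  also have "\<dots> = mtr (A ^\<^sub>m 2)" using sp(2)[of 2] by simp
  also have "\<dots> = M" unfolding A_def M_def by (rule mtr_adj2[OF G])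
  finally have sq: "mu^2 + (\<Sum>x\<leftarrow>xs. x^2) = M" using mus_cons by simp
  have lenx: "length xs + 1 = n" using mus_cons lm by auto
  have W: "wsum n A = M" unfolding A_def M_def by (rule wsum_adj[OF G])
  have TA: "transpose_mat A = A" unfolding A_def by (rule adj_transpose[OF G])
  have n0: "n > 0" using n2 by simp
  have W0: "wsum n A \<ge> 0" using W unfolding M_def by simp
  have "mu \<ge> wsum n A / n" by (rule mu_ge_avg[OF cA TA n0 sp(2) len bound W0])
  hence D: "mu \<ge> M / n" using W by simp
  have H': "(mu - M / n) + (M - real n + 1 - mu^2) / (2*t+1) \<ge> (2*t)/(2*t+1) * ln mu"
    using H unfolding mu_def2 t_def2 M_def .
  have "mu + sum_list xs \<ge> real n - 1 + M / n" by (rule core[OF xs_le t0 mu0 lnsum sq lenx D H'])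
  moreover have "energy es = mu + sum_list xs"
  proof -
    have "energy es = sum_list (map abs es)" unfolding energy_def ..
    also have "\<dots> = sum_list (map id mus)" using mset_sum_map[OF ms, of id] by simp
    finally show ?thesis using mus_cons by simp
  qed
  ultimately show ?thesis unfolding M_def by simp
qed

end
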